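(* Let $\lambda\in\mathbb{R}\setminus\{0\}$, $k\in\mathbb{Z}$, $u\in\mathbb{C}$ with $u\neq 1$, and $x\in\mathbb{R}$. Then for every integer $n\geq 0$, \[ \sum_{m=0}^{n}\binom{n}{m}FG_{m,\lambda}^{(k)}(x,u)\,(1)_{n-m,\lambda}-u\,FG_{n,\lambda}^{(k)}(x,u) =(1-u)\,n\sum_{m=0}^{n-1}\frac{\binom{n-1}{m}}{m+1}\sum_{j=1}^{m+1}\frac{(1)_{j,\lambda}}{j^{k-1}}S_{1,\lambda}(m+1,j)\,(x)_{n-1-m,\lambda}. \]
   Context: All generating functions are formal power series in $t$. For $z\in\mathbb{C}$: $(z)_{0,\lambda}=1$ and $(z)_{n,\lambda}=z(z-\lambda)\cdots(z-(n-1)\lambda)$ for $n\ge1$. The degenerate exponential is $e_\lambda^{z}(t)=(1+\lambda t)^{z/\lambda}=\sum_{n\ge0}(z)_{n,\lambda}\frac{t^n}{n!}$, and $e_\lambda(t)=e_\lambda^{1}(t)$. Also $\log_\lambda(1+t)=\frac{1}{\lambda}\big((1+t)^\lambda-1\big)$. The degenerate Stirling numbers of the first kind are defined by $\frac{1}{j!}(\log_\lambda(1+t))^j=\sum_{n\ge j}S_{1,\lambda}(n,j)\frac{t^n}{n!}$. The modified degenerate polyexponential function is $\mathrm{Ei}_{k,\lambda}(x)=\sum_{n\ge1}\frac{(1)_{n,\lambda}}{n^k(n-1)!}x^n$. The degenerate poly-Frobenius-Genocchi polynomials are defined by $\sum_{n\ge0}FG_{n,\lambda}^{(k)}(x,u)\frac{t^n}{n!}=\frac{(1-u)\,\mathrm{Ei}_{k,\lambda}(\log_\lambda(1+t))}{e_\lambda(t)-u}e_\lambda^{x}(t)$.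 *)

theory Defs
  imports "HOL-Analysis.Analysis" "HOL-Computational_Algebra.Formal_Power_Series"
begin

definition dfall :: "complex \<Rightarrow> real \<Rightarrow> nat \<Rightarrow> complex" where
  "dfall z lam n = (\<Prod>i<n. z - of_nat i * complex_of_real lam)"

definition dexp_fps :: "real \<Rightarrow> complex \<Rightarrow> complex fps" where
  "dexp_fps lam z = Abs_fps (\<lambda>n. dfall z lam n / fact n)"

definition dlog_fps :: "real \<Rightarrow> complex fps" where
  "dlog_fps lam = fps_const (1 / complex_of_real lam) * (fps_binomial (complex_of_real lam) - 1)"

definition S1 :: "real \<Rightarrow> nat \<Rightarrow> nat \<Rightarrow> complex" where
  "S1 lam n j = fact n * fps_nth (fps_const (1 / fact j) * dlog_fps lam ^ j) n"

definition Ei_fps :: "int \<Rightarrow> real \<Rightarrow> complex fps" where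
  "Ei_fps k lam = Abs_fps (\<lambda>n. if n = 0 then 0
      else dfall 1 lam n / ((of_nat n) powi k * fact (n - 1)))"

definition FG_gf :: "int \<Rightarrow> real \<Rightarrow> complex \<Rightarrow> complex \<Rightarrow> complex fps" where
  "FG_gf k lam x u = fps_const (1 - u) * (Ei_fps k lam oo dlog_fps lam)
      * inverse (dexp_fps lam 1 - fps_const u) * dexp_fps lam x"

definition FG :: "nat \<Rightarrow> real \<Rightarrow> int \<Rightarrow> complex \<Rightarrow> complex \<Rightarrow> complex" where
  "FG n lam k x u = fact n * fps_nth (FG_gf k lam x u) n"

end

theory Submission
  imports Defs
begin

unbundle no vec_syntax
notation fps_nth (infixl \<open>$\<close> 75)

lemma aux_a1: "(fm::complex) \<noteq> 0 \<Longrightarrow> fn/(fm*fnm) * (fm*g) * d = fn * (g * (d/fnm))"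
  by (simp add: field_simps)

lemma aux_a2: "(x::complex)/(a*b)*P = x/a*(P/b)"
  by (simp add: divide_inverse ac_simps)

lemma aux_a3: "((N::complex)*F)*(A/(c*a)*d/b) = N*(F/(a*b)/c*A*d)"
  by (simp add: divide_inverse ac_simps)

lemma ei_comp_nth:
  fixes lam :: real and k :: int
  shows "(Ei_fps k lam oo dlog_fps lam) $ N =
     (\<Sum>j=1..N. dfall 1 lam j / (of_nat j) powi (k - 1) * S1 lam N j) / fact N"
proof -
  have "(Ei_fps k lam oo dlog_fps lam) $ N = (\<Sum>j=0..N. Ei_fps k lam $ j * (dlog_fps lam ^ j $ N))"
    by (simp add: fps_compose_nth)
  also have "\<dots> = (\<Sum>j=1..N. Ei_fps k lam $ j * (dlog_fps lam ^ j $ N))"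
    by (rule sum.mono_neutral_right) (auto simp: Ei_fps_def)
  also have "\<dots> = (\<Sum>j=1..N. dfall 1 lam j / (of_nat j) powi (k - 1) * S1 lam N j / fact N)"
  proof (rule sum.cong[OF refl])
    fix j assume j: "j \<in> {1..N}"
    then have j0: "(of_nat j :: complex) \<noteq> 0" by auto
    have pk: "(of_nat j :: complex) powi k = of_nat j * (of_nat j) powi (k - 1)"
      using j0 by (metis add.commute diff_add_cancel power_int_add power_int_1_right)
    have fj: "(fact j :: complex) = of_nat j * fact (j - 1)"
      using j fact_reduce[of j] by simp
    have e: "(of_nat j :: complex) powi k * fact (j - 1) = (of_nat j) powi (k - 1) * fact j"
      using pk fj by simp
    have ei1: "Ei_fps k lam $ j = dfall 1 lam j / ((of_nat j) powi k * fact (j - 1))"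
      using j by (simp add: Ei_fps_def)
    have ei: "Ei_fps k lam $ j = dfall 1 lam j / ((of_nat j) powi (k - 1) * fact j)"
      using ei1 by (simp only: e)
    have s1: "S1 lam N j / fact N = dlog_fps lam ^ j $ N / fact j"
      unfolding S1_def by simp
    have "dfall 1 lam j / (of_nat j) powi (k - 1) * S1 lam N j / fact N
        = dfall 1 lam j / (of_nat j) powi (k - 1) * (S1 lam N j / fact N)"
      by (simp only: times_divide_eq_right)
    also have "\<dots> = dfall 1 lam j / (of_nat j) powi (k - 1) * (dlog_fps lam ^ j $ N / fact j)"
      by (simp only: s1)
    also have "\<dots> = dfall 1 lam j / ((of_nat j) powi (k - 1) * fact j) * (dlog_fps lam ^ j $ N)"
      by (simp only: aux_a2)
    also have "\<dots> = Ei_fps k lam $ j * (dlog_fps lam ^ j $ N)"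
      by (simp only: ei)
    finally show "Ei_fps k lam $ j * (dlog_fps lam ^ j $ N) =
        dfall 1 lam j / (of_nat j) powi (k - 1) * S1 lam N j / fact N" by simp
  qed
  also have "\<dots> = (\<Sum>j=1..N. dfall 1 lam j / (of_nat j) powi (k - 1) * S1 lam N j) / fact N"
    by (simp add: sum_divide_distrib)
  finally show ?thesis .
qed

theorem theorem2:
  fixes lam :: real and k :: int and u :: complex and x :: real and n :: nat
  assumes "lam \<noteq> 0" and "u \<noteq> 1"
  shows "(\<Sum>m=0..n. of_nat (n choose m) * FG m lam k (complex_of_real x) u * dfall 1 lam (n - m))
           - u * FG n lam k (complex_of_real x) u
         = (1 - u) * of_nat n * (\<Sum>m=0..<n. of_nat ((n - 1) choose m) / of_nat (m + 1) *
             (\<Sum>j=1..m+1. dfall 1 lam j / (of_nat j) powi (k - 1) * S1 lam (m + 1) j)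
             * dfall (complex_of_real x) lam (n - 1 - m))"
proof -
  define x' where "x' = complex_of_real x"
  define G where "G = FG_gf k lam x' u"
  define D1 where "D1 = dexp_fps lam 1"
  define E where "E = Ei_fps k lam oo dlog_fps lam"
  define A where "A N = (\<Sum>j=1..N. dfall 1 lam j / (of_nat j) powi (k - 1) * S1 lam N j)" for N
  have D10: "D1 $ 0 = 1" by (simp add: D1_def dexp_fps_def dfall_def)
  have inv: "inverse (D1 - fps_const u) * (D1 - fps_const u) = 1"
    by (rule inverse_mult_eq_1) (use D10 assms(2) in simp)
  have GD: "G * (D1 - fps_const u) = fps_const (1 - u) * E * dexp_fps lam x'"
  proof -
    have "G * (D1 - fps_const u) = fps_const (1 - u) * E * dexp_fps lam x' *
        (inverse (D1 - fps_const u) * (D1 - fps_const u))"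
      unfolding G_def FG_gf_def E_def D1_def by (simp add: algebra_simps)
    then show ?thesis using inv by simp
  qed
  have s1: "(\<Sum>m=0..n. of_nat (n choose m) * FG m lam k x' u * dfall 1 lam (n - m))
      = fact n * (G * D1) $ n"
    unfolding fps_mult_nth sum_distrib_left
  proof (rule sum.cong[OF refl])
    fix m assume m: "m \<in> {0..n}"
    have "(of_nat (n choose m) :: complex) = fact n / (fact m * fact (n - m))"
      using m by (simp add: binomial_fact)
    then show "of_nat (n choose m) * FG m lam k x' u * dfall 1 lam (n - m) =
        fact n * (G $ m * D1 $ (n - m))"
      unfolding FG_def G_def D1_def dexp_fps_def fps_nth_Abs_fps
      by (simp only: aux_a1[OF fact_nonzero])
  qed
  have lhs: "(\<Sum>m=0..n. of_nat (n choose m) * FG m lam k x' u * dfall 1 lam (n - m))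
      - u * FG n lam k x' u = fact n * (1 - u) * (E * dexp_fps lam x') $ n"
  proof -
    have "(\<Sum>m=0..n. of_nat (n choose m) * FG m lam k x' u * dfall 1 lam (n - m))
      - u * FG n lam k x' u = fact n * (G * D1) $ n - u * (fact n * G $ n)"
      using s1 by (simp add: FG_def G_def)
    also have "\<dots> = fact n * ((G * D1) $ n - G $ n * u)"
      by (simp add: algebra_simps)
    also have "(G * D1) $ n - G $ n * u = (G * (D1 - fps_const u)) $ n"
      by (simp add: algebra_simps)
    also have "(G * (D1 - fps_const u)) $ n = (fps_const (1 - u) * (E * dexp_fps lam x')) $ n"
      using GD by (simp add: mult.assoc)
    also have "(fps_const (1 - u) * (E * dexp_fps lam x')) $ n = (1 - u) * (E * dexp_fps lam x') $ n"
      by simp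
    finally show ?thesis by (simp add: mult.assoc)
  qed
  have E0: "E $ 0 = 0" unfolding E_def ei_comp_nth by simp
  have "(E * dexp_fps lam x') $ n = (\<Sum>i=0..n. E $ i * dfall x' lam (n - i) / fact (n - i))"
    by (simp add: fps_mult_nth dexp_fps_def)
  also have "\<dots> = (\<Sum>i=1..n. E $ i * dfall x' lam (n - i) / fact (n - i))"
    by (rule sum.mono_neutral_right) (auto simp: E0 not_less_eq_eq)
  also have "\<dots> = (\<Sum>m=0..<n. E $ (m+1) * dfall x' lam (n - 1 - m) / fact (n - 1 - m))"
    by (rule sum.reindex_bij_witness[of _ Suc "\<lambda>i. i - 1"]) auto
  finally have ED: "(E * dexp_fps lam x') $ n =
      (\<Sum>m=0..<n. A (m+1) / fact (m+1) * dfall x' lam (n - 1 - m) / fact (n - 1 - m))"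
    by (simp add: E_def ei_comp_nth A_def)
  have rhs: "fact n * (\<Sum>m=0..<n. A (m+1) / fact (m+1) * dfall x' lam (n - 1 - m) / fact (n - 1 - m))
     = of_nat n * (\<Sum>m=0..<n. of_nat ((n - 1) choose m) / of_nat (m + 1) * A (m+1)
          * dfall x' lam (n - 1 - m))"
    unfolding sum_distrib_left
  proof (rule sum.cong[OF refl])
    fix m assume m: "m \<in> {0..<n}"
    then have "(of_nat ((n - 1) choose m) :: complex) = fact (n - 1) / (fact m * fact (n - 1 - m))"
      by (simp add: binomial_fact)
    moreover have "(fact n :: complex) = of_nat n * fact (n - 1)"
      using m fact_reduce[of n] by simp
    moreover have "(fact (m + 1) :: complex) = of_nat (m + 1) * fact m"
      using fact_reduce[of "m + 1"] by simp
    ultimately show "fact n * (A (m + 1) / fact (m + 1) * dfall x' lam (n - 1 - m) / fact (n - 1 - m)) =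
         of_nat n * (of_nat (n - 1 choose m) / of_nat (m + 1) * A (m + 1) * dfall x' lam (n - 1 - m))"
      by (simp only: aux_a3)
  qed
  show ?thesis
    using lhs ED rhs unfolding x'_def[symmetric] A_def[symmetric]
    by (simp add: algebra_simps)
qed

end
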